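(* Let $d$ be an even positive integer and $s$ a positive integer with $2s\leqslant d$, and let $k\in\{1,2,\ldots,s-1\}$. Then the indexed family $\{B_\varepsilon\colon \varepsilon\in I^s,\ |\varepsilon|=k\}$ defines a partition of $X_k$; that is, the union of its members is $X_k$ and $B_\varepsilon\cap B_\gamma=\emptyset$ whenever $\varepsilon\neq\gamma$ (empty members allowed).
   Context: Let $I=\{0,1\}$; for a binary vector $x$ let $|x|=\sum_i x_i$. Let $\alpha=(0,\ldots,0)$, $\omega=(1,\ldots,1)\in I^s$. For $\varepsilon\in I^s\setminus\{\alpha,\omega\}$ let $i=t(\varepsilon)$ be the unique index with $\varepsilon_i\neq\varepsilon_{i+1}=\cdots=\varepsilon_s$, and $A_\varepsilon=\{\varepsilon_1\}\times\cdots\times\{\varepsilon_i\}\times I^{s-1-i}\subseteq I^{s-1}$. Define subsets of $I^{d-s}$: $X_0=\{x\colon |x|\leqslant \frac d2-s\}$; $X_k=\{x\colon |x|=\frac d2-s+k\}$ for $0<k<s$; $X_s=\{x\colon |x|\geqslant \frac d2\}$. Writing $x\in I^{d-s}$ as $x=(x',x'')\in I^{d-2s+1}\times I^{s-1}$, for $\varepsilon\in I^s\setminus\{\alpha,\omega\}$ set $B_\varepsilon=\{x=(x',x'')\in X_{|\varepsilon|}\colon x''\in A_\varepsilon\}=X_{|\varepsilon|}\cap(I^{d-2s+1}\times A_\varepsilon)$. *)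

theory Defs
  imports Main
begin

text \<open>Binary vectors in I^n are lists of naturals of length n with entries in {0,1};
  the i-th coordinate (1-based, as in the paper) is  x ! (i-1).\<close>

definition binvecs :: "nat \<Rightarrow> nat list set" where
  "binvecs n = {x. length x = n \<and> set x \<subseteq> {0,1}}"

definition wt :: "nat list \<Rightarrow> nat" where
  "wt x = sum_list x"

definition tidx :: "nat list \<Rightarrow> nat" where
  "tidx eps = (THE i. 1 \<le> i \<and> i < length eps \<and> eps ! (i - 1) \<noteq> eps ! i \<and>
      (\<forall>j. i \<le> j \<and> j < length eps \<longrightarrow> eps ! j = eps ! (length eps - 1)))"

text \<open>A_eps = {eps_1} x ... x {eps_i} x I^(s-1-i), a subset of I^(s-1), where s = length eps.\<close>
definition Aset :: "nat list \<Rightarrow> nat list set" where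
  "Aset eps = {y \<in> binvecs (length eps - 1). take (tidx eps) y = take (tidx eps) eps}"

text \<open>The sets X_k \<subseteq> I^(d-s), for d even and 2s \<le> d (so d/2 - s is a natural number).\<close>
definition Xset :: "nat \<Rightarrow> nat \<Rightarrow> nat \<Rightarrow> nat list set" where
  "Xset d s k =
     (if k = 0 then {x \<in> binvecs (d - s). wt x \<le> d div 2 - s}
      else if k < s then {x \<in> binvecs (d - s). wt x = d div 2 - s + k}
      else {x \<in> binvecs (d - s). wt x \<ge> d div 2})"

text \<open>B_eps = {x = (x',x'') \<in> X_|eps| : x'' \<in> A_eps}, with x' \<in> I^(d-2s+1), x'' \<in> I^(s-1).\<close>
definition Bset :: "nat \<Rightarrow> nat \<Rightarrow> nat list \<Rightarrow> nat list set" where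
  "Bset d s eps = {x \<in> Xset d s (wt eps). drop (d - 2 * s + 1) x \<in> Aset eps}"

end

theory Submission
  imports Defs
begin

lemma sum_bin_le: "set z \<subseteq> {0,1} \<Longrightarrow> sum_list z \<le> length (z::nat list)"
  by (induction z) auto

lemma eps_nth:
  assumes "i \<le> length y"
  shows "j < i \<Longrightarrow> (take i y @ replicate n c) ! j = y ! j"
    and "i \<le> j \<Longrightarrow> j < i + n \<Longrightarrow> (take i y @ replicate n c) ! j = c"
  using assms by (auto simp: nth_append min_def)

lemma tidx_rep:
  assumes "set y \<subseteq> {0,1::nat}" "1 \<le> i" "i \<le> length y"
  shows "tidx (take i y @ replicate (Suc (length y) - i) (1 - y!(i-1))) = i"
proof -
  let ?c = "1 - y!(i-1)"
  let ?e = "take i y @ replicate (Suc (length y) - i) ?c"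
  have len: "length ?e = Suc (length y)" using assms by simp
  have yi: "y!(i-1) \<in> {0,1}" proof -
    have "i - 1 < length y" using assms by linarith
    then show ?thesis using assms(1) nth_mem by blast
  qed
  have ne: "y!(i-1) \<noteq> ?c" using yi by auto
  have A: "\<And>j. j < i \<Longrightarrow> ?e ! j = y ! j" using eps_nth(1)[OF assms(3)] by blast
  have B: "\<And>j. i \<le> j \<Longrightarrow> j < Suc (length y) \<Longrightarrow> ?e ! j = ?c"
    using eps_nth(2)[OF assms(3)] assms by simp
  show ?thesis unfolding tidx_def
  proof (rule the_equality)
    show "1 \<le> i \<and> i < length ?e \<and> ?e ! (i - 1) \<noteq> ?e ! i \<and>
      (\<forall>j. i \<le> j \<and> j < length ?e \<longrightarrow> ?e ! j = ?e ! (length ?e - 1))"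
    proof (intro conjI allI impI)
      show "1 \<le> i" using assms by simp
      show "i < length ?e" using assms len by simp
      have "?e ! (i-1) = y!(i-1)" using A[of "i-1"] assms by simp
      moreover have "?e ! i = ?c" using B[of i] assms by simp
      ultimately show "?e ! (i - 1) \<noteq> ?e ! i" using ne by simp
      fix j assume "i \<le> j \<and> j < length ?e"
      then have "?e ! j = ?c" using B[of j] len by simp
      moreover have "?e ! (length ?e - 1) = ?c" using B[of "length y"] len assms by simp
      ultimately show "?e ! j = ?e ! (length ?e - 1)" by simp
    qed
  next
    fix j assume H: "1 \<le> j \<and> j < length ?e \<and> ?e ! (j - 1) \<noteq> ?e ! j \<and>
      (\<forall>k. j \<le> k \<and> k < length ?e \<longrightarrow> ?e ! k = ?e ! (length ?e - 1))"
    have H1: "1 \<le> j" "j < length ?e" "?e ! (j - 1) \<noteq> ?e ! j" using H by blast+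
    have H2: "\<And>k. j \<le> k \<Longrightarrow> k < length ?e \<Longrightarrow> ?e ! k = ?e ! (length ?e - 1)" using H by blast
    have last: "?e ! (length ?e - 1) = ?c" using B[of "length y"] len assms by simp
    show "j = i"
    proof (rule ccontr)
      assume "j \<noteq> i"
      then consider "j < i" | "i < j" by linarith
      then show False
      proof cases
        case 1
        then have "?e ! (i-1) = ?e ! (length ?e - 1)" using H2[of "i-1"] assms len by simp
        then have "?e ! (i-1) = ?c" using last by simp
        then show False using A[of "i-1"] assms ne by simp
      next
        case 2
        then have "?e ! j = ?c" "?e ! (j-1) = ?c" using H1 B[of j] B[of "j-1"] len by auto
        then show False using H1 by simp
      qed
    qed
  qed
qed


definition rp :: "nat \<Rightarrow> nat list \<Rightarrow> nat \<Rightarrow> nat list" where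
  "rp s y i = take i y @ replicate (s - i) (1 - y!(i-1))"

lemma eps_decomp:
  assumes "eps \<in> binvecs s" "1 \<le> wt eps" "wt eps \<le> s - 1"
  obtains i where "1 \<le> i" "i < s" "eps = take i eps @ replicate (s - i) (1 - eps!(i-1))"
    "tidx eps = i"
proof -
  have len: "length eps = s" and bin: "set eps \<subseteq> {0,1}" using assms(1) by (auto simp: binvecs_def)
  have s0: "s > 0" using assms len by (cases eps) (auto simp: wt_def)
  let ?c = "eps!(s-1)"
  have ex: "\<exists>j. j < s \<and> eps!j \<noteq> ?c"
  proof (rule ccontr)
    assume "\<not> ?thesis"
    then have nt: "\<And>j. j < s \<Longrightarrow> eps!j = ?c" by blast
    have "eps = replicate s ?c"
    proof (rule nth_equalityI)
      show "length eps = length (replicate s ?c)" using len by simp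
      fix j assume "j < length eps"
      then have "j < s" using len by simp
      then have "eps!j = ?c" by (rule nt)
      then show "eps ! j = replicate s ?c ! j" using \<open>j < s\<close> by simp
    qed
    moreover have "?c \<in> {0,1}"
    proof -
      have "s - 1 < length eps" using len s0 by simp
      then show ?thesis using bin nth_mem by blast
    qed
    ultimately have "wt eps = 0 \<or> wt eps = s" unfolding wt_def
      by (auto simp: sum_list_replicate)
    then show False using assms s0 by linarith
  qed
  define g where "g = (GREATEST j. j < s \<and> eps!j \<noteq> ?c)"
  have bnd: "\<forall>j. j < s \<and> eps!j \<noteq> ?c \<longrightarrow> j \<le> s" by auto
  obtain j0 where j0: "j0 < s \<and> eps!j0 \<noteq> ?c" using ex by blast
  have g1: "g < s \<and> eps!g \<noteq> ?c" unfolding g_def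
    by (rule GreatestI_nat[of _ j0 s]) (use j0 in auto)
  have g2: "\<And>j. j < s \<Longrightarrow> eps!j \<noteq> ?c \<Longrightarrow> j \<le> g" unfolding g_def
    by (rule Greatest_le_nat[of _ _ s]) auto
  define i where "i = Suc g"
  have i1: "1 \<le> i" unfolding i_def by simp
  have iS: "i < s"
  proof (rule ccontr)
    assume "\<not> i < s" then have "g = s - 1" using g1 unfolding i_def by linarith
    then show False using g1 by simp
  qed
  have tail: "\<And>j. i \<le> j \<Longrightarrow> j < s \<Longrightarrow> eps!j = ?c" using g2 unfolding i_def by force
  have gi: "eps!(i-1) \<noteq> ?c" using g1 unfolding i_def by simp
  have "i - 1 < length eps" "s - 1 < length eps" using len iS s0 by linarith+
  then have egi: "eps!(i-1) \<in> {0,1}" "?c \<in> {0,1}" using bin nth_mem by blast+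
  have cc: "?c = 1 - eps!(i-1)" using gi egi by auto
  have eq: "eps = take i eps @ replicate (s - i) (1 - eps!(i-1))"
  proof (rule nth_equalityI)
    show "length eps = length (take i eps @ replicate (s - i) (1 - eps!(i-1)))" using len iS by simp
    fix j assume "j < length eps"
    then show "eps ! j = (take i eps @ replicate (s - i) (1 - eps!(i-1))) ! j"
      using len iS tail[of j] cc by (auto simp: nth_append)
  qed
  define y where "y = butlast eps"
  have ly: "length y = s - 1" using len unfolding y_def by simp
  have bny: "set y \<subseteq> {0,1}" using bin unfolding y_def by (meson in_set_butlastD subset_iff)
  have ty: "take i y = take i eps" unfolding y_def using iS len by (simp add: take_butlast)
  have "i - 1 < length (butlast eps)" using iS len i1 by simp
  then have ny: "y!(i-1) = eps!(i-1)" unfolding y_def by (rule nth_butlast)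
  have "tidx (take i y @ replicate (Suc (length y) - i) (1 - y!(i-1))) = i"
    using tidx_rep[OF bny i1] iS ly by simp
  then have "tidx eps = i" using ty ny ly s0 eq by simp
  then show ?thesis using that i1 iS eq by blast
qed

lemma repr:
  assumes "eps \<in> binvecs s" "1 \<le> wt eps" "wt eps \<le> s - 1" "y \<in> Aset eps"
  shows "\<exists>i. 1 \<le> i \<and> i < s \<and> eps = rp s y i"
proof -
  obtain i where i: "1 \<le> i" "i < s" "eps = take i eps @ replicate (s - i) (1 - eps!(i-1))"
    "tidx eps = i" using eps_decomp[OF assms(1-3)] by blast
  have len: "length eps = s" using assms(1) by (simp add: binvecs_def)
  have ty: "take i y = take i eps" using assms(4) i(4) unfolding Aset_def by simp
  have "y!(i-1) = eps!(i-1)"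
  proof -
    have "take i y ! (i-1) = take i eps ! (i-1)" using ty by simp
    then show ?thesis using i(1) by simp
  qed
  then have "eps = rp s y i" using i(3) ty unfolding rp_def by simp
  then show ?thesis using i by blast
qed

lemma rp_in:
  assumes "y \<in> binvecs (s - 1)" "1 \<le> i" "i < s"
  shows "rp s y i \<in> binvecs s" "y \<in> Aset (rp s y i)"
proof -
  have ly: "length y = s - 1" and bny: "set y \<subseteq> {0,1}" using assms(1) by (auto simp: binvecs_def)
  have lr: "length (rp s y i) = s" using ly assms unfolding rp_def by simp
  have s1: "set (take i y) \<subseteq> {0,1}" using bny by (meson in_set_takeD subset_iff)
  have c01: "1 - y!(i-1) \<in> {0,1}" by auto
  have s2: "set (replicate (s - i) (1 - y!(i-1))) \<subseteq> {0,1}" using c01 by auto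
  have "set (rp s y i) \<subseteq> {0,1}" unfolding rp_def using s1 s2 by simp
  then show "rp s y i \<in> binvecs s" using lr by (simp add: binvecs_def)
  have "tidx (rp s y i) = i" unfolding rp_def using tidx_rep[OF bny assms(2)] ly assms
    by (metis Suc_diff_1 gr_implies_not0 le_diff_conv2 less_Suc_eq_le neq0_conv plus_1_eq_Suc)
  then show "y \<in> Aset (rp s y i)" using assms(1) lr ly assms(3) unfolding Aset_def rp_def by simp
qed

lemma wt_rp: "wt (rp s y i) = sum_list (take i y) + (s - i) * (1 - y!(i-1))"
  unfolding rp_def wt_def by (simp add: sum_list_replicate)

lemma exist_rp:
  assumes "y \<in> binvecs (s - 1)" "1 \<le> k" "k \<le> s - 1"
  shows "\<exists>i. 1 \<le> i \<and> i < s \<and> wt (rp s y i) = k"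
proof -
  have ly: "length y = s - 1" and bny: "set y \<subseteq> {0,1}" using assms(1) by (auto simp: binvecs_def)
  have yb: "\<And>j. j < length y \<Longrightarrow> y!j \<le> 1" using bny nth_mem by fastforce
  have tk: "\<And>i. 1 \<le> i \<Longrightarrow> i \<le> length y \<Longrightarrow> sum_list (take i y) = sum_list (take (i-1) y) + y!(i-1)"
  proof -
    fix i assume a: "1 \<le> i" "i \<le> length y"
    then have "i - 1 < length y" by linarith
    then have "take (Suc (i-1)) y = take (i-1) y @ [y!(i-1)]" by (rule take_Suc_conv_app_nth)
    moreover have "Suc (i-1) = i" using a by simp
    ultimately show "sum_list (take i y) = sum_list (take (i-1) y) + y!(i-1)" by simp
  qed
  show ?thesis
  proof (cases "k \<le> sum_list y")
    case True
    define P where "P = (\<lambda>i. k \<le> sum_list (take i y))"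
    define i where "i = (LEAST i. P i)"
    have Py: "P (length y)" using True unfolding P_def by simp
    have Pi: "P i" unfolding i_def by (rule LeastI[of P, OF Py])
    have il: "i \<le> length y" unfolding i_def by (rule Least_le[of P, OF Py])
    have i0: "i \<noteq> 0" using Pi assms(2) unfolding P_def by (cases i) auto
    have np: "\<not> P (i-1)" unfolding i_def by (rule not_less_Least) (use i0 i_def in simp)
    have "sum_list (take i y) = sum_list (take (i-1) y) + y!(i-1)" using tk[of i] i0 il by simp
    moreover have "y!(i-1) \<le> 1" using yb i0 il by simp
    ultimately have "sum_list (take i y) = k" "y!(i-1) = 1" using Pi np unfolding P_def by linarith+
    then have "wt (rp s y i) = k" by (simp add: wt_rp)
    moreover have "1 \<le> i" "i < s" using i0 il ly assms by linarith+
    ultimately show ?thesis by blast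
  next
    case False
    define P where "P = (\<lambda>i. sum_list (take i y) + (s - i) \<le> k)"
    define i where "i = (LEAST i. P i)"
    have Py: "P (length y)" using False ly assms unfolding P_def by simp
    have Pi: "P i" unfolding i_def by (rule LeastI[of P, OF Py])
    have il: "i \<le> length y" unfolding i_def by (rule Least_le[of P, OF Py])
    have i0: "i \<noteq> 0" using Pi assms unfolding P_def by auto
    have np: "\<not> P (i-1)" unfolding i_def by (rule not_less_Least) (use i0 i_def in simp)
    have "sum_list (take i y) = sum_list (take (i-1) y) + y!(i-1)" using tk[of i] i0 il by simp
    moreover have "y!(i-1) \<le> 1" using yb i0 il by simp
    ultimately have "sum_list (take i y) + (s - i) = k" "y!(i-1) = 0" using Pi np il ly i0 unfolding P_def by linarith+
    then have "wt (rp s y i) = k" by (simp add: wt_rp)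
    moreover have "1 \<le> i" "i < s" using i0 il ly assms by linarith+
    ultimately show ?thesis by blast
  qed
qed

lemma uniq_rp:
  assumes "y \<in> binvecs (s - 1)" "1 \<le> i" "i < j" "j < s" "wt (rp s y i) = wt (rp s y j)"
  shows False
proof -
  have ly: "length y = s - 1" and bny: "set y \<subseteq> {0,1}" using assms(1) by (auto simp: binvecs_def)
  define z where "z = drop i (take (j-1) y)"
  have lz: "length z = j - 1 - i" unfolding z_def using ly assms by simp
  have bz: "set z \<subseteq> {0,1}" unfolding z_def using bny by (meson in_set_dropD in_set_takeD subset_iff)
  have sz: "sum_list z \<le> j - 1 - i" using sum_bin_le[OF bz] lz by simp
  have jl: "j - 1 < length y" "i - 1 < length y" using ly assms by linarith+
  have ij: "i \<le> j - 1" using assms by linarith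
  have tt: "take i (take (j-1) y) = take i y" using ij by (simp add: min_absorb1)
  have t1: "take (j-1) y = take i y @ z" unfolding z_def using tt append_take_drop_id by metis
  have t2: "take j y = take (j-1) y @ [y!(j-1)]"
    using take_Suc_conv_app_nth[OF jl(1)] assms(2,3) by simp
  have yi: "y!(i-1) \<in> {0,1}" "y!(j-1) \<in> {0,1}" using bny jl nth_mem by blast+
  have eq: "sum_list z + y!(j-1) + (s - j) * (1 - y!(j-1)) = (s - i) * (1 - y!(i-1))"
    using assms(5) t1 t2 unfolding wt_rp by simp
  show False
  proof (cases "y!(i-1) = 0")
    case True
    then show False using yi(2) eq sz assms(3,4) by (cases "y!(j-1) = 0") auto
  next
    case False
    then have "y!(i-1) = 1" using yi(1) by auto
    then show False using yi(2) eq sz assms(3,4) by (cases "y!(j-1) = 0") auto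
  qed
qed


theorem corollary1:
  fixes d s k :: nat
  assumes "even d" and "d > 0" and "s > 0" and "2 * s \<le> d"
    and "1 \<le> k" and "k \<le> s - 1"
  shows "(\<Union>eps \<in> {eps \<in> binvecs s. wt eps = k}. Bset d s eps) = Xset d s k
     \<and> (\<forall>eps \<in> {eps \<in> binvecs s. wt eps = k}. \<forall>gam \<in> {eps \<in> binvecs s. wt eps = k}.
          eps \<noteq> gam \<longrightarrow> Bset d s eps \<inter> Bset d s gam = {})"
proof (intro conjI ballI impI)
  show "(\<Union>eps \<in> {eps \<in> binvecs s. wt eps = k}. Bset d s eps) = Xset d s k"
  proof (intro equalityI subsetI)
    fix x assume "x \<in> (\<Union>eps \<in> {eps \<in> binvecs s. wt eps = k}. Bset d s eps)"
    then show "x \<in> Xset d s k" unfolding Bset_def by auto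
  next
    fix x assume xX: "x \<in> Xset d s k"
    have ks: "k \<noteq> 0" "k < s" using assms by linarith+
    have xb: "x \<in> binvecs (d - s)" using xX ks unfolding Xset_def by simp
    define y where "y = drop (d - 2 * s + 1) x"
    have yb: "y \<in> binvecs (s - 1)" using xb assms unfolding y_def binvecs_def
      by (auto dest: in_set_dropD)
    obtain i where i: "1 \<le> i" "i < s" "wt (rp s y i) = k" using exist_rp[OF yb assms(5,6)] by blast
    have e1: "rp s y i \<in> binvecs s" "y \<in> Aset (rp s y i)" using rp_in[OF yb i(1,2)] by blast+
    have "x \<in> Bset d s (rp s y i)" unfolding Bset_def using xX i(3) e1(2) y_def by simp
    then show "x \<in> (\<Union>eps \<in> {eps \<in> binvecs s. wt eps = k}. Bset d s eps)" using e1(1) i(3) by blast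
  qed
next
  fix eps gam
  assume e: "eps \<in> {eps \<in> binvecs s. wt eps = k}" and g: "gam \<in> {eps \<in> binvecs s. wt eps = k}"
    and ne: "eps \<noteq> gam"
  show "Bset d s eps \<inter> Bset d s gam = {}"
  proof (rule ccontr)
    assume "Bset d s eps \<inter> Bset d s gam \<noteq> {}"
    then obtain x where "x \<in> Bset d s eps" "x \<in> Bset d s gam" by blast
    then have ya: "drop (d - 2 * s + 1) x \<in> Aset eps" "drop (d - 2 * s + 1) x \<in> Aset gam"
      unfolding Bset_def by auto
    define y where "y = drop (d - 2 * s + 1) x"
    have le: "length eps = s" using e by (simp add: binvecs_def)
    have yb: "y \<in> binvecs (s - 1)" using ya le unfolding y_def Aset_def by simp
    obtain i where i: "1 \<le> i" "i < s" "eps = rp s y i"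
      using repr[of eps s y] e ya assms(5,6) unfolding y_def by auto
    obtain j where j: "1 \<le> j" "j < s" "gam = rp s y j"
      using repr[of gam s y] g ya assms(5,6) unfolding y_def by auto
    have w: "wt (rp s y i) = wt (rp s y j)" using e g i j by simp
    have "i \<noteq> j" using ne i j by auto
    then consider "i < j" | "j < i" by linarith
    then show False
    proof cases
      case 1 then show False using uniq_rp[OF yb i(1) 1 j(2) w] by blast
    next
      case 2 then show False using uniq_rp[OF yb j(1) 2 i(2) w[symmetric]] by blast
    qed
  qed
qed

end
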